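(* For every integer $d\geqslant 1$ and every real $x>0$, $$Q_d(x)=\vartheta(d)\sqrt x+O(d^2),$$ with an absolute implied constant. Here $$\vartheta(d)=\frac{32d^2}{5}\sqrt d-\frac{48d^2+16d-2}{15}\sqrt{d+1}-\frac{48d^2-16d-2}{15}\sqrt{d-1}.$$
   Context: For real $t$, $\lfloor t\rfloor$ is the integer part and $\{t\}=t-\lfloor t\rfloor$ the fractional part. For an integer $d\geqslant 0$ and real $x>0$, $$Q_d(x)=\sum_{n\geqslant 1}\big[\lfloor x/n\rfloor-\lfloor x/(n+1)\rfloor=d\big]\cdot\big(\{x/n\}-\{x/(n+1)\}\big)^2,$$ where $[P]$ equals $1$ if the proposition $P$ is true and $0$ otherwise. *)

theory Defs
  imports "HOL-Analysis.Analysis"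
begin

definition frac_part :: "real \<Rightarrow> real" where
  "frac_part t = t - of_int \<lfloor>t\<rfloor>"

definition Q :: "nat \<Rightarrow> real \<Rightarrow> real" where
  "Q d x = infsum (\<lambda>n::nat.
      (if \<lfloor>x / real n\<rfloor> - \<lfloor>x / real (n+1)\<rfloor> = int d
       then (frac_part (x / real n) - frac_part (x / real (n+1)))\<^sup>2 else 0)) {1..}"

definition vartheta :: "nat \<Rightarrow> real" where
  "vartheta d = 32 * (real d)\<^sup>2 / 5 * sqrt (real d)
     - (48 * (real d)\<^sup>2 + 16 * real d - 2) / 15 * sqrt (real d + 1)
     - (48 * (real d)\<^sup>2 - 16 * real d - 2) / 15 * sqrt (real d - 1)"

end

theory Submission
  imports Defs
begin


definition gg :: "real \<Rightarrow> real" where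
  "gg e = (if \<bar>e\<bar> < 1 then (1 - \<bar>e\<bar>) * e\<^sup>2 else 0)"
definition mm :: "real \<Rightarrow> real" where
  "mm e = (if 1 \<le> e then 1 else if e \<le> -1 then -1 else e * \<bar>e\<bar>)"
definition jj :: "real \<Rightarrow> real" where
  "jj e = (if 1 \<le> e then 1 else if e \<le> -1 then -1 else 0)"
definition Tt :: "nat \<Rightarrow> real \<Rightarrow> nat \<Rightarrow> real" where
  "Tt d x n = (if \<lfloor>x / real n\<rfloor> - \<lfloor>x / real (n+1)\<rfloor> = int d
       then (frac_part (x / real n) - frac_part (x / real (n+1)))\<^sup>2 else 0)"
definition ee :: "nat \<Rightarrow> real \<Rightarrow> nat \<Rightarrow> real" where
  "ee d x n = x / (real n * real (n+1)) - real d"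

lemma frac_bounds: "0 \<le> frac_part t" "frac_part t < 1"
  unfolding frac_part_def by linarith+

lemma decomp:
  assumes n: "n \<ge> 1"
  shows "Tt d x n = gg (ee d x n) + (frac_part (x / real n) - frac_part (x / real (n+1)))
            * (mm (ee d x n) - jj (ee d x n))"
proof -
  define a where "a = frac_part (x / real n)"
  define b where "b = frac_part (x / real (n+1))"
  define D where "D = \<lfloor>x / real n\<rfloor> - \<lfloor>x / real (n+1)\<rfloor>"
  define e where "e = ee d x n"
  have t: "x / real n - x / real (n+1) = x / (real n * real (n+1))"
    using n by (simp add: field_simps)
  have De: "real_of_int (D - int d) = e - (a - b)"
    using t unfolding D_def a_def b_def e_def ee_def frac_part_def by simp
  have ab: "a - b < 1" "a - b > -1" using frac_bounds[of "x / real n"] frac_bounds[of "x / real (n+1)"]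
    unfolding a_def b_def by linarith+
  have T: "Tt d x n = (if D = int d then (a - b)\<^sup>2 else 0)"
    unfolding Tt_def D_def a_def b_def by simp
  show ?thesis
    unfolding T a_def[symmetric] b_def[symmetric] e_def[symmetric]
  proof (cases "1 \<le> e")
    case True
    then have "D \<noteq> int d" using De ab by auto
    then show "(if D = int d then (a - b)\<^sup>2 else 0) = gg e + (a - b) * (mm e - jj e)"
      using True by (simp add: gg_def mm_def jj_def)
  next
    case F1: False
    show "(if D = int d then (a - b)\<^sup>2 else 0) = gg e + (a - b) * (mm e - jj e)"
    proof (cases "e \<le> -1")
      case True
      then have "D \<noteq> int d" using De ab by auto
      then show ?thesis using True by (simp add: gg_def mm_def jj_def)
    next
      case F2: False
      have gm: "gg e = (1 - \<bar>e\<bar>) * e\<^sup>2" "mm e - jj e = e * \<bar>e\<bar>"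
        using F1 F2 by (auto simp: gg_def mm_def jj_def)
      have r1: "real_of_int (D - int d) < 2" "real_of_int (D - int d) > -2" using De ab F1 F2 by linarith+
      then have "D - int d \<in> {-1, 0, 1}" by auto
      then consider "D = int d" | "D = int d + 1" | "D = int d - 1" by force
      then show ?thesis
      proof cases
        case 1
        then have "a - b = e" using De by simp
        then show ?thesis unfolding gm using 1
          by (cases "e \<ge> 0") (auto simp: power2_eq_square algebra_simps)
      next
        case 2
        then have "a - b = e - 1" using De by simp
        then have "e \<ge> 0" using ab by linarith
        then have "(1 - \<bar>e\<bar>) * e\<^sup>2 + (a - b) * (e * \<bar>e\<bar>) = (1 - e) * e\<^sup>2 + (e - 1) * (e * e)"
          using \<open>a - b = e - 1\<close> by simp
        then show ?thesis unfolding gm using 2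
          by (simp add: power2_eq_square algebra_simps)
      next
        case 3
        then have "a - b = e + 1" using De by simp
        then have "e < 0" using ab by linarith
        then have "(1 - \<bar>e\<bar>) * e\<^sup>2 + (a - b) * (e * \<bar>e\<bar>) = (1 + e) * e\<^sup>2 + (e + 1) * (e * (- e))"
          using \<open>a - b = e + 1\<close> by simp
        then show ?thesis unfolding gm using 3
          by (simp add: power2_eq_square algebra_simps)
      qed
    qed
  qed
qed

lemma Q_sum:
  assumes d: "d \<ge> 1" and x: "x > 0" and N: "real N \<ge> x"
  shows "Q d x = (\<Sum>n=1..N. Tt d x n)"
proof -
  have "Q d x = infsum (Tt d x) {1..}" unfolding Q_def Tt_def by simp
  also have "\<dots> = infsum (Tt d x) {1..N}"
  proof (rule infsum_cong_neutral)
    fix n assume "n \<in> {1..} - {1..N}"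
    then have n: "n > N" by auto
    then have "real n > x" using N by linarith
    then have "x / real n < 1" "x / real (n+1) < 1" using x by (auto simp: field_simps)
    moreover have "x / real n \<ge> 0" "x / real (n+1) \<ge> 0" using x by auto
    ultimately have "\<lfloor>x / real n\<rfloor> = 0" "\<lfloor>x / real (n+1)\<rfloor> = 0"
      by (simp_all add: floor_eq_iff)
    then show "Tt d x n = 0" using d unfolding Tt_def by simp
  qed auto
  also have "\<dots> = (\<Sum>n=1..N. Tt d x n)" by simp
  finally show ?thesis .
qed

lemma sbp_aux:
  fixes f c :: "nat \<Rightarrow> real"
  assumes "\<And>n. n \<ge> 1 \<Longrightarrow> c (Suc n) \<le> c n" and "\<And>n. \<bar>f n\<bar> \<le> 1" and "N \<ge> 1"
  shows "\<bar>(\<Sum>n=1..N. (f n - f (Suc n)) * c n) - f 1 * c 1 + f (Suc N) * c N\<bar> \<le> c 1 - c N"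
  using assms(3)
proof (induction N)
  case 0 then show ?case by simp
next
  case (Suc N)
  show ?case
  proof (cases "N = 0")
    case True then show ?thesis by (simp add: algebra_simps)
  next
    case False
    then have IH: "\<bar>(\<Sum>n=1..N. (f n - f (Suc n)) * c n) - f 1 * c 1 + f (Suc N) * c N\<bar> \<le> c 1 - c N"
      using Suc by auto
    have m: "c (Suc N) \<le> c N" using assms(1) False by auto
    have e: "(\<Sum>n=1..Suc N. (f n - f (Suc n)) * c n) - f 1 * c 1 + f (Suc (Suc N)) * c (Suc N)
      = ((\<Sum>n=1..N. (f n - f (Suc n)) * c n) - f 1 * c 1 + f (Suc N) * c N) + f (Suc N) * (c (Suc N) - c N)"
      by (simp add: algebra_simps)
    have a: "\<bar>f (Suc N) * (c (Suc N) - c N)\<bar> \<le> c N - c (Suc N)"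
      using m assms(2)[of "Suc N"] by (simp add: abs_mult mult_left_le_one_le)
    show ?thesis unfolding e using IH a by (smt (verit))
  qed
qed

lemma sbp:
  fixes f c :: "nat \<Rightarrow> real"
  assumes "\<And>n. n \<ge> 1 \<Longrightarrow> c (Suc n) \<le> c n" and "\<And>n. \<bar>f n\<bar> \<le> 1" and "\<And>n. \<bar>c n\<bar> \<le> 1"
  shows "\<bar>\<Sum>n=1..N. (f n - f (Suc n)) * c n\<bar> \<le> 4"
proof (cases "N = 0")
  case True then show ?thesis by simp
next
  case False
  have h: "\<bar>(\<Sum>n=1..N. (f n - f (Suc n)) * c n) - f 1 * c 1 + f (Suc N) * c N\<bar> \<le> c 1 - c N"
    using sbp_aux[of c f N] assms(1,2) False by auto
  have "\<bar>f 1 * c 1\<bar> \<le> 1" "\<bar>f (Suc N) * c N\<bar> \<le> 1"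
    using assms(2,3) by (simp_all add: abs_mult mult_le_one)
  moreover have "c 1 - c N \<le> 2" using assms(3)[of 1] assms(3)[of N] by linarith
  ultimately show ?thesis using h by linarith
qed

lemma floor_tele:
  "(\<Sum>n=1..N. real_of_int (\<lfloor>x / real n\<rfloor> - \<lfloor>x / real (n+1)\<rfloor>))
     = real_of_int \<lfloor>x\<rfloor> - real_of_int \<lfloor>x / real (N+1)\<rfloor>"
  by (induction N) (auto simp: algebra_simps)

lemma count_bound:
  assumes d: "d \<ge> 1" and x: "x > 0"
  shows "(\<Sum>n=1..N. Tt d x n) \<le> x / real d"
proof -
  have "Tt d x n \<le> real_of_int (\<lfloor>x / real n\<rfloor> - \<lfloor>x / real (n+1)\<rfloor>) / real d" if n: "n \<ge> 1" for n
  proof -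
    have "x / real (n+1) \<le> x / real n" using x n by (simp add: frac_le)
    then have D0: "\<lfloor>x / real (n+1)\<rfloor> \<le> \<lfloor>x / real n\<rfloor>" by (rule floor_mono)
    have ab: "\<bar>frac_part (x / real n) - frac_part (x / real (n+1))\<bar> \<le> 1"
      using frac_bounds[of "x / real n"] frac_bounds[of "x / real (n+1)"] by linarith
    then have sq: "(frac_part (x / real n) - frac_part (x / real (n+1)))\<^sup>2 \<le> 1"
      by (simp add: abs_le_square_iff[symmetric] abs_square_le_1)
    show ?thesis
    proof (cases "\<lfloor>x / real n\<rfloor> - \<lfloor>x / real (n+1)\<rfloor> = int d")
      case True then show ?thesis using sq d unfolding Tt_def by simp
    next
      case False then show ?thesis using D0 unfolding Tt_def by simp
    qed
  qed
  then have "(\<Sum>n=1..N. Tt d x n) \<le> (\<Sum>n=1..N. real_of_int (\<lfloor>x / real n\<rfloor> - \<lfloor>x / real (n+1)\<rfloor>) / real d)"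
    by (intro sum_mono) auto
  also have "\<dots> = (real_of_int \<lfloor>x\<rfloor> - real_of_int \<lfloor>x / real (N+1)\<rfloor>) / real d"
    using floor_tele[of x N] by (simp add: sum_divide_distrib[symmetric] del: of_int_diff)
  also have "\<dots> \<le> x / real d"
  proof -
    have "0 \<le> \<lfloor>x / real (N+1)\<rfloor>" using x by simp
    then have "real_of_int \<lfloor>x\<rfloor> - real_of_int \<lfloor>x / real (N+1)\<rfloor> \<le> x" by linarith
    then show ?thesis using d by (simp add: divide_right_mono)
  qed
  finally show ?thesis .
qed




definition Bm :: "real \<Rightarrow> real \<Rightarrow> real" where
  "Bm d r = 2/5*r^5 + 2/3*(1-3*d)*r^3 + 2*(3*d\<^sup>2-2*d)*r - 2*(1-d)*d\<^sup>2/r"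
definition Bp :: "real \<Rightarrow> real \<Rightarrow> real" where
  "Bp d r = -2/5*r^5 + 2/3*(3*d+1)*r^3 - 2*(3*d\<^sup>2+2*d)*r - 2*(d+1)*d\<^sup>2/r"

lemma Bm_deriv:
  assumes "r \<noteq> 0"
  shows "(Bm d has_real_derivative (2*r^4 + 2*(1-3*d)*r\<^sup>2 + 2*(3*d\<^sup>2-2*d) + 2*(1-d)*d\<^sup>2/r\<^sup>2)) (at r)"
  unfolding Bm_def
  apply (rule derivative_eq_intros refl | simp add: assms)+
  using assms by (simp add: field_simps power2_eq_square eval_nat_numeral)

lemma Bp_deriv:
  assumes "r \<noteq> 0"
  shows "(Bp d has_real_derivative (-2*r^4 + 2*(3*d+1)*r\<^sup>2 - 2*(3*d\<^sup>2+2*d) + 2*(d+1)*d\<^sup>2/r\<^sup>2)) (at r)"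
  unfolding Bp_def
  apply (rule derivative_eq_intros refl | simp add: assms)+
  using assms by (simp add: field_simps power2_eq_square eval_nat_numeral)

lemma sqrt_div_chain:
  assumes "x > 0" "v > 0"
  shows "((\<lambda>v. sqrt x / v) has_real_derivative (- sqrt x / v\<^sup>2)) (at v)"
  using assms by (auto intro!: derivative_eq_intros simp: power2_eq_square)

lemma Bm_chain:
  assumes x: "x > 0" and v: "v > 0"
  shows "((\<lambda>v. sqrt x / 2 * Bm d (sqrt x / v)) has_real_derivative
           - ((1 + (x / v\<^sup>2 - d)) * (x / v\<^sup>2 - d)\<^sup>2)) (at v)"
proof -
  define r where "r = sqrt x / v"
  have r0: "r \<noteq> 0" using x v by (simp add: r_def)
  have xr: "x / v\<^sup>2 = r\<^sup>2" using x v by (simp add: r_def power_divide)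
  have D: "((\<lambda>v. sqrt x / 2 * Bm d (sqrt x / v)) has_real_derivative
      sqrt x / 2 * ((2*r^4 + 2*(1-3*d)*r\<^sup>2 + 2*(3*d\<^sup>2-2*d) + 2*(1-d)*d\<^sup>2/r\<^sup>2) * (- sqrt x / v\<^sup>2))) (at v)"
    unfolding r_def
    by (intro DERIV_cmult DERIV_chain2[OF Bm_deriv sqrt_div_chain[OF x v]]) (use r0 r_def in auto)
  have e1: "sqrt x / 2 * (- sqrt x / v\<^sup>2) = - (x / v\<^sup>2) / 2"
    using x by (simp add: field_simps)
  have "sqrt x / 2 * ((2*r^4 + 2*(1-3*d)*r\<^sup>2 + 2*(3*d\<^sup>2-2*d) + 2*(1-d)*d\<^sup>2/r\<^sup>2) * (- sqrt x / v\<^sup>2))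
     = (sqrt x / 2 * (- sqrt x / v\<^sup>2)) * (2*r^4 + 2*(1-3*d)*r\<^sup>2 + 2*(3*d\<^sup>2-2*d) + 2*(1-d)*d\<^sup>2/r\<^sup>2)"
    by (simp only: ac_simps)
  also have "\<dots> = - (r\<^sup>2) / 2 * (2*r^4 + 2*(1-3*d)*r\<^sup>2 + 2*(3*d\<^sup>2-2*d) + 2*(1-d)*d\<^sup>2/r\<^sup>2)"
    unfolding e1 xr ..
  also have "\<dots> = - ((1 + (r\<^sup>2 - d)) * (r\<^sup>2 - d)\<^sup>2)"
    using r0 by (simp add: field_simps power2_eq_square eval_nat_numeral)
  finally show ?thesis using D xr by simp
qed

lemma Bp_chain:
  assumes x: "x > 0" and v: "v > 0"
  shows "((\<lambda>v. sqrt x / 2 * Bp d (sqrt x / v)) has_real_derivative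
           - ((1 - (x / v\<^sup>2 - d)) * (x / v\<^sup>2 - d)\<^sup>2)) (at v)"
proof -
  define r where "r = sqrt x / v"
  have r0: "r \<noteq> 0" using x v by (simp add: r_def)
  have xr: "x / v\<^sup>2 = r\<^sup>2" using x v by (simp add: r_def power_divide)
  have D: "((\<lambda>v. sqrt x / 2 * Bp d (sqrt x / v)) has_real_derivative
      sqrt x / 2 * ((-2*r^4 + 2*(3*d+1)*r\<^sup>2 - 2*(3*d\<^sup>2+2*d) + 2*(d+1)*d\<^sup>2/r\<^sup>2) * (- sqrt x / v\<^sup>2))) (at v)"
    unfolding r_def
    by (intro DERIV_cmult DERIV_chain2[OF Bp_deriv sqrt_div_chain[OF x v]]) (use r0 r_def in auto)
  have e1: "sqrt x / 2 * (- sqrt x / v\<^sup>2) = - (x / v\<^sup>2) / 2"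
    using x by (simp add: field_simps)
  have "sqrt x / 2 * ((-2*r^4 + 2*(3*d+1)*r\<^sup>2 - 2*(3*d\<^sup>2+2*d) + 2*(d+1)*d\<^sup>2/r\<^sup>2) * (- sqrt x / v\<^sup>2))
     = (sqrt x / 2 * (- sqrt x / v\<^sup>2)) * (-2*r^4 + 2*(3*d+1)*r\<^sup>2 - 2*(3*d\<^sup>2+2*d) + 2*(d+1)*d\<^sup>2/r\<^sup>2)"
    by (simp only: ac_simps)
  also have "\<dots> = - (r\<^sup>2) / 2 * (-2*r^4 + 2*(3*d+1)*r\<^sup>2 - 2*(3*d\<^sup>2+2*d) + 2*(d+1)*d\<^sup>2/r\<^sup>2)"
    unfolding e1 xr ..
  also have "\<dots> = - ((1 - (r\<^sup>2 - d)) * (r\<^sup>2 - d)\<^sup>2)"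
    using r0 by (simp add: field_simps power2_eq_square eval_nat_numeral)
  finally show ?thesis using D xr by simp
qed

definition clmp :: "real \<Rightarrow> real \<Rightarrow> real \<Rightarrow> real" where
  "clmp a b v = max a (min v b)"

definition Phi :: "nat \<Rightarrow> real \<Rightarrow> real \<Rightarrow> real" where
  "Phi d x u = sqrt x / 2 * (Bm (real d) (sqrt (clmp (real d - 1) (real d) (x / u\<^sup>2)))
                            + Bp (real d) (sqrt (clmp (real d) (real d + 1) (x / u\<^sup>2))))"

lemma ev_near:
  fixes x u a b :: real
  assumes u: "u > 0" and "a < x / u\<^sup>2" "x / u\<^sup>2 < b"
  shows "eventually (\<lambda>v. v > 0 \<and> a < x / v\<^sup>2 \<and> x / v\<^sup>2 < b) (nhds u)"
proof -
  have id: "((\<lambda>v. v) \<longlongrightarrow> u) (nhds u)" by (rule filterlim_ident)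
  have lim: "((\<lambda>v. x / v\<^sup>2) \<longlongrightarrow> x / u\<^sup>2) (nhds u)"
  proof -
    have "isCont (\<lambda>v. x / v\<^sup>2) u" using u by (intro continuous_intros) auto
    then show ?thesis using tendsto_at_iff_tendsto_nhds[of "\<lambda>v. x / v\<^sup>2" u] by (simp add: isCont_def)
  qed
  show ?thesis
    using order_tendstoD(1)[OF id u] order_tendstoD(1)[OF lim assms(2)] order_tendstoD(2)[OF lim assms(3)]
    by eventually_elim auto
qed

lemma sqrt_xv: "v > 0 \<Longrightarrow> sqrt (x / v\<^sup>2) = sqrt x / v"
  by (simp add: real_sqrt_divide)

lemma Phi_deriv:
  assumes x: "x > 0" and u: "u > 0" and d: "d \<ge> 1"
    and ns: "x / u\<^sup>2 \<noteq> real d - 1" "x / u\<^sup>2 \<noteq> real d" "x / u\<^sup>2 \<noteq> real d + 1"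
  shows "(Phi d x has_real_derivative - gg (x / u\<^sup>2 - real d)) (at u)"
proof -
  consider "x / u\<^sup>2 < real d - 1" | "real d - 1 < x / u\<^sup>2 \<and> x / u\<^sup>2 < real d"
    | "real d < x / u\<^sup>2 \<and> x / u\<^sup>2 < real d + 1" | "real d + 1 < x / u\<^sup>2"
    using ns by linarith
  then show ?thesis
  proof cases
    case 1
    have "eventually (\<lambda>v. v > 0 \<and> -1 < x / v\<^sup>2 \<and> x / v\<^sup>2 < real d - 1) (nhds u)"
      using x u 1 by (intro ev_near) (auto intro: less_le_trans[of _ 0])
    then have ev: "eventually (\<lambda>v. Phi d x v = sqrt x / 2 * (Bm (real d) (sqrt (real d - 1)) + Bp (real d) (sqrt (real d)))) (nhds u)"
      by eventually_elim (auto simp: Phi_def clmp_def)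
    have g: "gg (x / u\<^sup>2 - real d) = 0" using 1 by (simp add: gg_def)
    show ?thesis unfolding g
      by (subst DERIV_cong_ev[OF refl ev refl]) (auto intro!: derivative_eq_intros)
  next
    case 2
    have "eventually (\<lambda>v. v > 0 \<and> real d - 1 < x / v\<^sup>2 \<and> x / v\<^sup>2 < real d) (nhds u)"
      using x u 2 by (intro ev_near) auto
    then have ev: "eventually (\<lambda>v. Phi d x v = sqrt x / 2 * Bm (real d) (sqrt x / v) + sqrt x / 2 * Bp (real d) (sqrt (real d))) (nhds u)"
      by eventually_elim (auto simp: Phi_def clmp_def sqrt_xv algebra_simps)
    have g: "gg (x / u\<^sup>2 - real d) = (1 + (x / u\<^sup>2 - real d)) * (x / u\<^sup>2 - real d)\<^sup>2"
      using 2 by (simp add: gg_def)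
    show ?thesis unfolding g
      by (subst DERIV_cong_ev[OF refl ev refl])
        (use DERIV_add[OF Bm_chain[OF x u] DERIV_const[of "sqrt x / 2 * Bp (real d) (sqrt (real d))" "at u"]] in simp)
  next
    case 3
    have "eventually (\<lambda>v. v > 0 \<and> real d < x / v\<^sup>2 \<and> x / v\<^sup>2 < real d + 1) (nhds u)"
      using x u 3 by (intro ev_near) auto
    then have ev: "eventually (\<lambda>v. Phi d x v = sqrt x / 2 * Bm (real d) (sqrt (real d)) + sqrt x / 2 * Bp (real d) (sqrt x / v)) (nhds u)"
      by eventually_elim (auto simp: Phi_def clmp_def sqrt_xv algebra_simps)
    have g: "gg (x / u\<^sup>2 - real d) = (1 - (x / u\<^sup>2 - real d)) * (x / u\<^sup>2 - real d)\<^sup>2"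
      using 3 by (simp add: gg_def)
    show ?thesis unfolding g
      by (subst DERIV_cong_ev[OF refl ev refl])
        (use DERIV_add[OF DERIV_const[of "sqrt x / 2 * Bm (real d) (sqrt (real d))" "at u"] Bp_chain[OF x u]] in simp)
  next
    case 4
    have "eventually (\<lambda>v. v > 0 \<and> real d + 1 < x / v\<^sup>2 \<and> x / v\<^sup>2 < x / u\<^sup>2 + 1) (nhds u)"
      using x u 4 by (intro ev_near) auto
    then have ev: "eventually (\<lambda>v. Phi d x v = sqrt x / 2 * (Bm (real d) (sqrt (real d)) + Bp (real d) (sqrt (real d + 1)))) (nhds u)"
      by eventually_elim (auto simp: Phi_def clmp_def)
    have g: "gg (x / u\<^sup>2 - real d) = 0" using 4 by (simp add: gg_def)
    show ?thesis unfolding g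
      by (subst DERIV_cong_ev[OF refl ev refl]) (auto intro!: derivative_eq_intros)
  qed
qed

lemma Phi_cont:
  assumes x: "x > 0" and d: "d \<ge> 1" and S: "S \<subseteq> {0<..}"
  shows "continuous_on S (Phi d x)"
proof -
  have p1: "sqrt (clmp (real d - 1) (real d) (x / u\<^sup>2)) \<noteq> 0" if "u \<in> S" for u
  proof -
    have "u > 0" using S that by auto
    then have "x / u\<^sup>2 > 0" using x by simp
    then show ?thesis using d by (simp add: clmp_def)
  qed
  have p2: "sqrt (clmp (real d) (real d + 1) (x / u\<^sup>2)) \<noteq> 0" if "u \<in> S" for u
    using d by (simp add: clmp_def)
  show ?thesis
    unfolding Phi_def Bm_def Bp_def clmp_def
    using p1 p2 S unfolding clmp_def
    by (intro continuous_intros) auto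
qed

lemma cube_lip:
  fixes a b :: real
  assumes "0 \<le> a" "a \<le> 1" "0 \<le> b" "b \<le> 1"
  shows "\<bar>a^3 - b^3\<bar> \<le> 3 * \<bar>a - b\<bar>"
proof -
  have e: "a^3 - b^3 = (a - b) * (a\<^sup>2 + a*b + b\<^sup>2)" by (simp add: algebra_simps power2_eq_square eval_nat_numeral)
  have "a\<^sup>2 + a*b + b\<^sup>2 \<le> 3" using assms
    by (smt (verit, best) mult_le_one power_le_one)
  moreover have "a\<^sup>2 + a*b + b\<^sup>2 \<ge> 0" using assms by simp
  ultimately have "\<bar>a - b\<bar> * (a\<^sup>2 + a*b + b\<^sup>2) \<le> \<bar>a - b\<bar> * 3"
    by (intro mult_left_mono) auto
  then show ?thesis unfolding e abs_mult using \<open>a\<^sup>2 + a*b + b\<^sup>2 \<ge> 0\<close> by simp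
qed

lemma sq_lip:
  fixes a b :: real
  assumes "\<bar>a\<bar> \<le> 1" "\<bar>b\<bar> \<le> 1"
  shows "\<bar>a\<^sup>2 - b\<^sup>2\<bar> \<le> 2 * \<bar>a - b\<bar>"
proof -
  have e: "a\<^sup>2 - b\<^sup>2 = (a - b) * (a + b)" by (simp add: algebra_simps power2_eq_square)
  have "\<bar>a + b\<bar> \<le> 2" using assms by linarith
  then have "\<bar>a - b\<bar> * \<bar>a + b\<bar> \<le> \<bar>a - b\<bar> * 2"
    by (intro mult_left_mono) auto
  then show ?thesis unfolding e abs_mult by simp
qed

lemma gg_alt: "gg e = (max (-1) (min e 1))\<^sup>2 - \<bar>max (-1) (min e 1)\<bar>^3"
  unfolding gg_def
  by (auto simp: max_def min_def power2_eq_square eval_nat_numeral algebra_simps abs_if)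

lemma gg_lip: "\<bar>gg a - gg b\<bar> \<le> 5 * \<bar>a - b\<bar>"
proof -
  define p where "p = max (-1) (min a (1::real))"
  define q where "q = max (-1) (min b (1::real))"
  have pq: "\<bar>p\<bar> \<le> 1" "\<bar>q\<bar> \<le> 1" "\<bar>p - q\<bar> \<le> \<bar>a - b\<bar>"
    unfolding p_def q_def by (auto simp: max_def min_def)
  have "\<bar>gg a - gg b\<bar> \<le> \<bar>p\<^sup>2 - q\<^sup>2\<bar> + \<bar>\<bar>p\<bar>^3 - \<bar>q\<bar>^3\<bar>"
    unfolding gg_alt p_def[symmetric] q_def[symmetric] by linarith
  also have "\<dots> \<le> 2 * \<bar>p - q\<bar> + 3 * \<bar>\<bar>p\<bar> - \<bar>q\<bar>\<bar>"
    using sq_lip[OF pq(1,2)] cube_lip[of "\<bar>p\<bar>" "\<bar>q\<bar>"] pq by simp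
  also have "\<dots> \<le> 5 * \<bar>a - b\<bar>"
    using pq(3) abs_triangle_ineq3[of p q] by linarith
  finally show ?thesis .
qed




lemma step_bound:
  assumes x: "x > 0" and n: "n \<ge> 1" and u: "real n \<le> u" "u \<le> real n + 1"
  shows "\<bar>gg (ee d x n) - gg (x / u\<^sup>2 - real d)\<bar>
     \<le> 5 * (if x / (real n + 1)\<^sup>2 < real d + 1 then x / (real n)\<^sup>2 - x / (real n + 1)\<^sup>2 else 0)"
proof -
  have m: "real n \<ge> 1" using n by simp
  have u0: "u > 0" using m u by linarith
  have b1: "x / (real n + 1)\<^sup>2 \<le> x / u\<^sup>2" using x u m u0
    by (intro divide_left_mono) (auto intro: power_mono)
  have b2: "x / u\<^sup>2 \<le> x / (real n)\<^sup>2" using x u m u0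
    by (intro divide_left_mono) (auto intro: power_mono)
  have le: "real n * real (n+1) \<le> (real n + 1)\<^sup>2" by (simp add: power2_eq_square algebra_simps)
  have pos: "0 < (real n + 1)\<^sup>2 * (real n * real (n+1))" using m by simp
  have b3: "x / (real n + 1)\<^sup>2 \<le> x / (real n * real (n+1))"
    using divide_left_mono[OF le _ pos, of x] x by simp
  have b4: "x / (real n * real (n+1)) \<le> x / (real n)\<^sup>2" using x m
    by (intro divide_left_mono) (auto simp: power2_eq_square)
  show ?thesis
  proof (cases "x / (real n + 1)\<^sup>2 < real d + 1")
    case True
    have "\<bar>ee d x n - (x / u\<^sup>2 - real d)\<bar> \<le> x / (real n)\<^sup>2 - x / (real n + 1)\<^sup>2"
      unfolding ee_def using b1 b2 b3 b4 by linarith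
    then show ?thesis using gg_lip[of "ee d x n" "x / u\<^sup>2 - real d"] True by simp
  next
    case False
    then have "ee d x n \<ge> 1" "x / u\<^sup>2 - real d \<ge> 1" unfolding ee_def using b1 b3 by linarith+
    then show ?thesis using False by (simp add: gg_def)
  qed
qed

lemma Phi_step:
  assumes x: "x > 0" and d: "d \<ge> 1" and n: "n \<ge> 1"
  shows "\<bar>gg (ee d x n) - (Phi d x (real n) - Phi d x (real n + 1))\<bar>
     \<le> 5 * (if x / (real n + 1)\<^sup>2 < real d + 1 then x / (real n)\<^sup>2 - x / (real n + 1)\<^sup>2 else 0)"
proof -
  define c where "c = gg (ee d x n)"
  define E where "E = 5 * (if x / (real n + 1)\<^sup>2 < real d + 1 then x / (real n)\<^sup>2 - x / (real n + 1)\<^sup>2 else 0)"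
  define F where "F u = Phi d x u + c * u" for u
  define S where "S = {sqrt (x / (real d - 1)), sqrt (x / real d), sqrt (x / (real d + 1))}"
  have m: "real n \<ge> 1" using n by simp
  have E0: "E \<ge> 0" unfolding E_def
    using x m by (auto intro!: divide_left_mono power_mono)
  have deriv: "(F has_vector_derivative (c - gg (x / u\<^sup>2 - real d))) (at u)"
    if u: "u \<in> {real n<..<real n + 1} - S" for u
  proof -
    have u0: "u > 0" using u m by auto
    have ne: "x / u\<^sup>2 \<noteq> c'" if "u \<notin> {sqrt (x / c')}" for c'
    proof
      assume h: "x / u\<^sup>2 = c'"
      then have "x / c' = u\<^sup>2" using x u0 by (auto simp: h[symmetric])
      then have "sqrt (x / c') = sqrt (u\<^sup>2)" by simp
      then show False using that u0 by simp
    qed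
    have ns: "x / u\<^sup>2 \<noteq> real d - 1" "x / u\<^sup>2 \<noteq> real d" "x / u\<^sup>2 \<noteq> real d + 1"
      using u by (auto intro!: ne simp: S_def)
    have "(F has_real_derivative (- gg (x / u\<^sup>2 - real d) + c * 1)) (at u)"
      unfolding F_def
      by (intro DERIV_add Phi_deriv[OF x u0 d ns] DERIV_cmult DERIV_ident)
    then show ?thesis by (simp add: has_real_derivative_iff_has_vector_derivative[symmetric])
  qed
  have cont: "continuous_on {real n..real n + 1} F"
    unfolding F_def using m
    by (intro continuous_intros Phi_cont[OF x d]) auto
  have int: "((\<lambda>u. c - gg (x / u\<^sup>2 - real d)) has_integral (F (real n + 1) - F (real n))) {real n..real n + 1}"
    by (rule fundamental_theorem_of_calculus_interior_strong[where S = S])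
       (use deriv cont in \<open>auto simp: S_def\<close>)
  have bd: "norm (c - gg (x / u\<^sup>2 - real d)) \<le> E" if "u \<in> {real n..real n + 1} - {}" for u
    using step_bound[OF x n, of u d] that unfolding c_def E_def real_norm_def by simp
  have "norm (F (real n + 1) - F (real n)) \<le> E * Henstock_Kurzweil_Integration.content {real n..real n + 1}"
    by (rule has_integral_bound_real[OF E0 _ int, of "{}"]) (use bd in auto)
  then have "\<bar>F (real n + 1) - F (real n)\<bar> \<le> E" by simp
  moreover have "F (real n + 1) - F (real n) = c - (Phi d x (real n) - Phi d x (real n + 1))"
    unfolding F_def by (simp add: algebra_simps)
  ultimately show ?thesis unfolding c_def E_def by simp
qed

lemma pows_gen: "r * r = (c::real) \<Longrightarrow> r ^ 5 = r * c\<^sup>2 \<and> r ^ 3 = r * c"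
proof -
  assume h: "r * r = c"
  have "r ^ 5 = r * ((r * r) * (r * r))" "r ^ 3 = r * (r * r)" by (simp_all add: eval_nat_numeral)
  then show ?thesis unfolding h by (simp add: power2_eq_square)
qed

lemma sqrt_pows: "c \<ge> 0 \<Longrightarrow> sqrt c ^ 5 = sqrt c * c\<^sup>2 \<and> sqrt c ^ 3 = sqrt c * c"
  by (rule pows_gen) simp

lemma divsq: "a * b / sqrt c = a * (b / sqrt c)" by simp

lemma Bm_d:
  assumes "D > 0"
  shows "Bm D (sqrt D) = sqrt D * (32/5 * D\<^sup>2 - 16/3 * D)"
proof -
  have "2*(1-D)*D\<^sup>2 / sqrt D = (2*(1-D)*D) * (D / sqrt D)" by (simp add: power2_eq_square)
  then have k: "2*(1-D)*D\<^sup>2 / sqrt D = 2*(1-D)*D * sqrt D"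
    using real_div_sqrt[of D] assms by simp
  show ?thesis unfolding Bm_def k unfolding sqrt_pows[of D, THEN conjunct1, OF less_imp_le[OF assms]]
      sqrt_pows[of D, THEN conjunct2, OF less_imp_le[OF assms]]
    by (simp add: field_simps power2_eq_square)
qed

lemma Bp_d:
  assumes "D > 0"
  shows "Bp D (sqrt D) = sqrt D * (-(32/5) * D\<^sup>2 - 16/3 * D)"
proof -
  have "2*(D+1)*D\<^sup>2 / sqrt D = (2*(D+1)*D) * (D / sqrt D)" by (simp add: power2_eq_square)
  then have k: "2*(D+1)*D\<^sup>2 / sqrt D = 2*(D+1)*D * sqrt D"
    using real_div_sqrt[of D] assms by simp
  show ?thesis unfolding Bp_def k unfolding sqrt_pows[of D, THEN conjunct1, OF less_imp_le[OF assms]]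
      sqrt_pows[of D, THEN conjunct2, OF less_imp_le[OF assms]]
    by (simp add: field_simps power2_eq_square)
qed

lemma Bm_dm1:
  assumes "D \<ge> 1"
  shows "Bm D (sqrt (D-1)) = sqrt (D-1) * (32/5 * D\<^sup>2 - 32/15 * D - 4/15)"
proof -
  have k: "2*(1-D)*D\<^sup>2 / sqrt (D-1) = - 2*D\<^sup>2 * sqrt (D-1)"
  proof -
    have e: "2*(1-D)*D\<^sup>2 = (- 2*D\<^sup>2) * (D-1)" by (simp add: algebra_simps)
    have "2*(1-D)*D\<^sup>2 / sqrt (D-1) = (- 2*D\<^sup>2) * ((D-1) / sqrt (D-1))"
      unfolding e by (rule divsq)
    then show ?thesis using real_div_sqrt[of "D-1"] assms by simp
  qed
  have p: "sqrt (D-1) ^ 5 = sqrt (D-1) * (D-1)\<^sup>2" "sqrt (D-1) ^ 3 = sqrt (D-1) * (D-1)"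
    using sqrt_pows[of "D-1"] assms by auto
  show ?thesis unfolding Bm_def k unfolding p
    using assms by (simp add: field_simps power2_eq_square)
qed

lemma Bp_dp1:
  assumes "D \<ge> 0"
  shows "Bp D (sqrt (D+1)) = sqrt (D+1) * (-(32/5) * D\<^sup>2 - 32/15 * D + 4/15)"
proof -
  have k: "2*(D+1)*D\<^sup>2 / sqrt (D+1) = 2*D\<^sup>2 * sqrt (D+1)"
  proof -
    have e: "2*(D+1)*D\<^sup>2 = (2*D\<^sup>2) * (D+1)" by (simp add: algebra_simps)
    have "2*(D+1)*D\<^sup>2 / sqrt (D+1) = (2*D\<^sup>2) * ((D+1) / sqrt (D+1))"
      unfolding e by (rule divsq)
    then show ?thesis using real_div_sqrt[of "D+1"] assms by simp
  qed
  have p: "sqrt (D+1) ^ 5 = sqrt (D+1) * (D+1)\<^sup>2" "sqrt (D+1) ^ 3 = sqrt (D+1) * (D+1)"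
    using sqrt_pows[of "D+1"] assms by auto
  show ?thesis unfolding Bp_def k unfolding p
    using assms by (simp add: field_simps power2_eq_square)
qed

lemma vartheta_id:
  assumes "d \<ge> 1"
  shows "(Bm (real d) (sqrt (real d)) + Bp (real d) (sqrt (real d + 1))
          - (Bm (real d) (sqrt (real d - 1)) + Bp (real d) (sqrt (real d)))) / 2 = vartheta d"
proof -
  have d: "real d > 0" "real d \<ge> 1" "real d \<ge> 0" using assms by auto
  show ?thesis
    unfolding vartheta_def Bm_d[OF d(1)] Bp_d[OF d(1)] Bm_dm1[OF d(2)] Bp_dp1[OF d(3)]
    by (simp add: field_simps)
qed

lemma tele_real:
  fixes P :: "real \<Rightarrow> real"
  shows "(\<Sum>n=1..N. (P (real n) - P (real n + 1))) = P 1 - P (real N + 1)"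
proof (induction N)
  case 0 then show ?case by simp
next
  case (Suc N)
  then show ?case by (simp add: add.commute)
qed

lemma E_tele:
  assumes x: "x > 0" and n: "n \<ge> 1"
  shows "(if x / (real n + 1)\<^sup>2 < real d + 1 then x / (real n)\<^sup>2 - x / (real n + 1)\<^sup>2 else 0)
     \<le> min (x / (real n)\<^sup>2) (4 * (real d + 1)) - min (x / (real n + 1)\<^sup>2) (4 * (real d + 1))"
proof -
  have m: "real n \<ge> 1" using n by simp
  have mono: "x / (real n + 1)\<^sup>2 \<le> x / (real n)\<^sup>2" using x m
    by (intro divide_left_mono) (auto intro: power_mono)
  show ?thesis
  proof (cases "x / (real n + 1)\<^sup>2 < real d + 1")
    case True
    have "real n * real n \<ge> real n * 1" using m by (intro mult_left_mono) auto
    moreover have "(real n + 1)\<^sup>2 = real n * real n + 2 * real n + 1" "4 * (real n)\<^sup>2 = 4 * (real n * real n)"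
      by (simp_all add: power2_eq_square algebra_simps)
    ultimately have le4: "(real n + 1)\<^sup>2 \<le> 4 * (real n)\<^sup>2" using m by linarith
    have "x / (real n)\<^sup>2 = 4 * (x / (4 * (real n)\<^sup>2))" by simp
    also have "x / (4 * (real n)\<^sup>2) \<le> x / (real n + 1)\<^sup>2" using x m le4
      by (intro divide_left_mono) auto
    finally have "x / (real n)\<^sup>2 \<le> 4 * (x / (real n + 1)\<^sup>2)" by simp
    moreover have "4 * (x / (real n + 1)\<^sup>2) \<le> 4 * (real d + 1)" using True by simp
    ultimately have "x / (real n)\<^sup>2 \<le> 4 * (real d + 1)" by (rule order_trans)
    then show ?thesis using True by simp
  next
    case False
    then show ?thesis using mono by (simp add: min_def)
  qed
qed

lemma gsum:
  assumes x: "x > 0" and d: "d \<ge> 1"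
  shows "\<bar>(\<Sum>n=1..N. gg (ee d x n)) - (Phi d x 1 - Phi d x (real N + 1))\<bar> \<le> 20 * (real d + 1)"
proof -
  define mn where "mn r = min (x / r\<^sup>2) (4 * (real d + 1))" for r :: real
  have "\<bar>(\<Sum>n=1..N. gg (ee d x n)) - (Phi d x 1 - Phi d x (real N + 1))\<bar>
      = \<bar>\<Sum>n=1..N. (gg (ee d x n) - (Phi d x (real n) - Phi d x (real n + 1)))\<bar>"
    using tele_real[of "Phi d x" N] by (simp add: sum_subtractf)
  also have "\<dots> \<le> (\<Sum>n=1..N. \<bar>gg (ee d x n) - (Phi d x (real n) - Phi d x (real n + 1))\<bar>)"
    by (rule sum_abs)
  also have "\<dots> \<le> (\<Sum>n=1..N. 5 * (mn (real n) - mn (real n + 1)))"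
  proof (rule sum_mono)
    fix n assume "n \<in> {1..N}"
    then have n: "n \<ge> 1" by simp
    show "\<bar>gg (ee d x n) - (Phi d x (real n) - Phi d x (real n + 1))\<bar> \<le> 5 * (mn (real n) - mn (real n + 1))"
      using Phi_step[OF x d n] mult_left_mono[OF E_tele[OF x n, of d], of 5] unfolding mn_def by linarith
  qed
  also have "\<dots> = 5 * (\<Sum>n=1..N. (mn (real n) - mn (real n + 1)))"
    by (rule sum_distrib_left[symmetric])
  also have "\<dots> = 5 * (mn 1 - mn (real N + 1))"
    unfolding tele_real[of mn] ..
  also have "\<dots> \<le> 5 * (4 * (real d + 1))"
  proof -
    have "mn 1 \<le> 4 * (real d + 1)" "mn (real N + 1) \<ge> 0" unfolding mn_def using x by auto
    then show ?thesis by (smt (verit))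
  qed
  finally show ?thesis by simp
qed




lemma mm_mono: "a \<le> b \<Longrightarrow> mm a \<le> mm b"
proof -
  assume ab: "a \<le> b"
  have m: "a * \<bar>a\<bar> \<le> b * \<bar>b\<bar>"
  proof (cases "a \<ge> 0")
    case True
    then have "a * a \<le> b * b" using ab by (intro mult_mono) auto
    then show ?thesis using True ab by simp
  next
    case False
    show ?thesis
    proof (cases "b \<ge> 0")
      case True then show ?thesis using False by (simp add: abs_if)
    next
      case F2: False
      then have "(-b) * (-b) \<le> (-a) * (-a)" using ab by (intro mult_mono) auto
      then show ?thesis using False F2 by (simp add: abs_if)
    qed
  qed
  have b1: "a * \<bar>a\<bar> \<le> 1" if "a < 1" "a > -1" for a :: real
    using that by (cases "a \<ge> 0") (auto simp: abs_if mult_le_one intro: order_trans[of _ 0])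
  have b2: "a * \<bar>a\<bar> \<ge> -1" if "a < 1" "a > -1" for a :: real
  proof -
    have "(-a) * \<bar>-a\<bar> \<le> 1" using b1[of "-a"] that by simp
    then show ?thesis by simp
  qed
  show ?thesis unfolding mm_def using ab m b1[of a] b2[of b] b1[of b] b2[of a] by auto
qed

lemma jj_mono: "a \<le> b \<Longrightarrow> jj a \<le> jj b"
  unfolding jj_def by auto

lemma mm_bound: "\<bar>mm a\<bar> \<le> 1"
proof -
  have "\<bar>a * \<bar>a\<bar>\<bar> \<le> 1" if "\<bar>a\<bar> < 1"
  proof -
    have "\<bar>a\<bar> * \<bar>a\<bar> \<le> 1" using that by (intro mult_le_one) auto
    then show ?thesis by (simp add: abs_mult)
  qed
  then show ?thesis unfolding mm_def by auto
qed

lemma jj_bound: "\<bar>jj a\<bar> \<le> 1" unfolding jj_def by auto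

lemma ee_mono:
  assumes x: "x > 0" and n: "n \<ge> 1"
  shows "ee d x (Suc n) \<le> ee d x n"
  unfolding ee_def using x n
  by (simp add: frac_le mult_mono)

lemma frac_abs: "\<bar>frac_part t\<bar> \<le> 1" using frac_bounds[of t] by simp

lemma osc_bound:
  assumes x: "x > 0"
  shows "\<bar>\<Sum>n=1..N. (frac_part (x / real n) - frac_part (x / real (n+1))) * (mm (ee d x n) - jj (ee d x n))\<bar> \<le> 8"
proof -
  have A: "\<bar>\<Sum>n=1..N. (frac_part (x / real n) - frac_part (x / real (Suc n))) * mm (ee d x n)\<bar> \<le> 4"
    by (rule sbp) (auto simp: mm_mono ee_mono[OF x] frac_abs mm_bound)
  have B: "\<bar>\<Sum>n=1..N. (frac_part (x / real n) - frac_part (x / real (Suc n))) * jj (ee d x n)\<bar> \<le> 4"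
    by (rule sbp) (auto simp: jj_mono ee_mono[OF x] frac_abs jj_bound)
  have "(\<Sum>n=1..N. (frac_part (x / real n) - frac_part (x / real (n+1))) * (mm (ee d x n) - jj (ee d x n)))
    = (\<Sum>n=1..N. (frac_part (x / real n) - frac_part (x / real (Suc n))) * mm (ee d x n))
      - (\<Sum>n=1..N. (frac_part (x / real n) - frac_part (x / real (Suc n))) * jj (ee d x n))"
    by (simp add: sum_subtractf[symmetric] algebra_simps)
  then show ?thesis using A B by (smt (verit))
qed

lemma Phi_1:
  assumes "x \<ge> real d + 1"
  shows "Phi d x 1 = sqrt x / 2 * (Bm (real d) (sqrt (real d)) + Bp (real d) (sqrt (real d + 1)))"
  using assms unfolding Phi_def clmp_def by simp

lemma Bm1_bound:
  assumes "0 \<le> r" "r \<le> 1"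
  shows "\<bar>Bm 1 r\<bar> \<le> 4 * r"
proof -
  have p: "r ^ 5 \<le> r ^ 1" "r ^ 3 \<le> r ^ 1" using assms by (simp_all only: power_decreasing)
  have q: "r ^ 5 \<ge> 0" "r ^ 3 \<ge> 0" using assms by simp_all
  have e: "Bm 1 r = 2/5 * r^5 - 4/3 * r^3 + 2 * r" unfolding Bm_def by simp
  show ?thesis unfolding e using p q assms by (simp only: power_one_right)
qed

lemma Phi_end:
  assumes x: "x > 0" and d: "d \<ge> 1" and N: "real N \<ge> x"
  shows "\<bar>Phi d x (real N + 1) - sqrt x / 2 * (Bm (real d) (sqrt (real d - 1)) + Bp (real d) (sqrt (real d)))\<bar> \<le> 2"
proof -
  define s where "s = x / (real N + 1)\<^sup>2"
  have N1: "real N + 1 > 0" by simp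
  have s0: "s > 0" unfolding s_def using x by simp
  have "s \<le> x / (real N + 1)" unfolding s_def using x
    by (intro divide_left_mono) (auto simp: power2_eq_square)
  also have "\<dots> < 1" using N x by (simp add: divide_less_eq)
  finally have s1: "s < 1" .
  have c2: "clmp (real d) (real d + 1) s = real d" unfolding clmp_def using s1 d by simp
  show ?thesis
  proof (cases "d = 1")
    case False
    then have "clmp (real d - 1) (real d) s = real d - 1" unfolding clmp_def using s1 d by simp
    then show ?thesis unfolding Phi_def s_def[symmetric] c2 by simp
  next
    case True
    have c1: "clmp (real d - 1) (real d) s = s" unfolding clmp_def using s1 s0 True by simp
    have B0: "Bm 1 0 = 0" unfolding Bm_def by simp
    have "\<bar>Phi d x (real N + 1) - sqrt x / 2 * (Bm (real d) (sqrt (real d - 1)) + Bp (real d) (sqrt (real d)))\<bar>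
        = sqrt x / 2 * \<bar>Bm 1 (sqrt s)\<bar>"
      unfolding Phi_def s_def[symmetric] c1 c2 using True B0 x by (simp add: algebra_simps abs_mult)
    also have "\<dots> \<le> sqrt x / 2 * (4 * sqrt s)"
      using Bm1_bound[of "sqrt s"] s1 s0 x by (intro mult_left_mono) auto
    also have "\<dots> = 2 * (sqrt x * sqrt s)" by simp
    also have "sqrt x * sqrt s = x / (real N + 1)"
      unfolding s_def using x by (simp add: real_sqrt_mult[symmetric] real_sqrt_divide power2_eq_square)
    also have "2 * (x / (real N + 1)) \<le> 2" using N x by (simp add: divide_le_eq)
    finally show ?thesis .
  qed
qed

lemma main_large:
  assumes d: "d \<ge> 1" and x: "x \<ge> real d + 1"
  shows "\<bar>Q d x - vartheta d * sqrt x\<bar> \<le> 20 * (real d + 1) + 10"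
proof -
  have x0: "x > 0" using x by simp
  define N where "N = nat \<lceil>x\<rceil>"
  have N: "real N \<ge> x" unfolding N_def by linarith
  have Q: "Q d x = (\<Sum>n=1..N. gg (ee d x n))
      + (\<Sum>n=1..N. (frac_part (x / real n) - frac_part (x / real (n+1))) * (mm (ee d x n) - jj (ee d x n)))"
    unfolding Q_sum[OF d x0 N] sum.distrib[symmetric] by (rule sum.cong) (auto simp: decomp)
  have V: "Phi d x 1 - sqrt x / 2 * (Bm (real d) (sqrt (real d - 1)) + Bp (real d) (sqrt (real d))) = vartheta d * sqrt x"
    unfolding Phi_1[OF x] vartheta_id[OF d, symmetric] by (simp add: algebra_simps)
  have g: "\<bar>(\<Sum>n=1..N. gg (ee d x n)) - (Phi d x 1 - Phi d x (real N + 1))\<bar> \<le> 20 * (real d + 1)"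
    by (rule gsum[OF x0 d])
  have o: "\<bar>\<Sum>n=1..N. (frac_part (x / real n) - frac_part (x / real (n+1))) * (mm (ee d x n) - jj (ee d x n))\<bar> \<le> 8"
    by (rule osc_bound[OF x0])
  show ?thesis using Q V g o Phi_end[OF x0 d N] by linarith
qed

lemma Q_bounds:
  assumes d: "d \<ge> 1" and x: "x > 0"
  shows "0 \<le> Q d x" "Q d x \<le> x / real d"
proof -
  define N where "N = nat \<lceil>x\<rceil>"
  have N: "real N \<ge> x" unfolding N_def by linarith
  show "0 \<le> Q d x" unfolding Q_sum[OF d x N] by (rule sum_nonneg) (simp add: Tt_def)
  show "Q d x \<le> x / real d" unfolding Q_sum[OF d x N] by (rule count_bound[OF d x])
qed

theorem proposition10:
  shows "\<exists>C::real. \<forall>d::nat. \<forall>x::real. d \<ge> 1 \<longrightarrow> x > 0 \<longrightarrow>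
           \<bar>Q d x - vartheta d * sqrt x\<bar> \<le> C * (real d)\<^sup>2"
proof (intro exI allI impI)
  fix d :: nat and x :: real
  assume d: "d \<ge> 1" and x: "x > 0"
  have d1: "real d \<ge> 1" using d by simp
  have dd: "real d \<le> (real d)\<^sup>2" using d1 by (simp add: power2_eq_square)
  show "\<bar>Q d x - vartheta d * sqrt x\<bar> \<le> 60 * (real d)\<^sup>2"
  proof (cases "x \<ge> real d + 1")
    case True
    then show ?thesis using main_large[OF d True] dd d1 by (smt (verit))
  next
    case False
    define X where "X = real d + 1"
    have X: "X \<ge> real d + 1" "X > 0" unfolding X_def by simp_all
    have QX: "0 \<le> Q d X" "Q d X \<le> X / real d" using Q_bounds[OF d X(2)] by auto
    have "X / real d \<le> 2" unfolding X_def using d1 by (simp add: divide_le_eq)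
    then have th: "\<bar>vartheta d\<bar> * sqrt X \<le> 20 * (real d + 1) + 12"
      using main_large[OF d X(1)] QX by (simp add: abs_mult)
    have "sqrt x \<le> sqrt X" using False unfolding X_def by simp
    then have "\<bar>vartheta d\<bar> * sqrt x \<le> \<bar>vartheta d\<bar> * sqrt X" by (intro mult_left_mono) auto
    moreover have Qx: "0 \<le> Q d x" "Q d x \<le> x / real d" using Q_bounds[OF d x] by auto
    moreover have "x / real d \<le> 2" using False d1 by (simp add: divide_le_eq)
    moreover have "\<bar>Q d x - vartheta d * sqrt x\<bar> \<le> Q d x + \<bar>vartheta d\<bar> * sqrt x"
    proof -
      have "\<bar>vartheta d * sqrt x\<bar> = \<bar>vartheta d\<bar> * sqrt x" using x by (simp add: abs_mult)
      then show ?thesis using Qx abs_triangle_ineq4[of "Q d x" "vartheta d * sqrt x"] by simp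
    qed
    ultimately show ?thesis using th dd d1 by (smt (verit))
  qed
qed


end
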